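(* Let $(\mathbf X,\mathbf Y)$ be a general correlated source. There exists a sequence $\{\varepsilon_n\}_{n\ge1}$ with $\varepsilon_n\to0$ as $n\to\infty$ such that \[\overline H_s(\mathbf X|\mathbf Y)=\limsup_{n\to\infty}\frac1n\overline H_s^{\varepsilon_n}(X^n|Y^n);\] moreover, $\{\varepsilon_n\}$ can be chosen so that in addition $\frac1n\log\frac1{\varepsilon_n}\to0$.
   Context: A general correlated source $(\mathbf X,\mathbf Y)=\{(X^n,Y^n)\}_{n\ge1}$ is an arbitrary sequence of pairs of random variables on $\mathcal X^n\times\mathcal Y^n$, $\mathcal X,\mathcal Y$ finite or countably infinite (no structural assumptions; marginal probabilities positive). Logs base 2. For $x^n$ and $\varepsilon\in(0,1]$: $\overline h^\varepsilon(x^n)=\inf\{a\in\mathbb R:\sum_{y^n:\log(1/P_{X^n|Y^n}(x^n|y^n))>a}P_{Y^n|X^n}(y^n|x^n)\le\varepsilon\}$; $\overline H_s^\varepsilon(X^n|Y^n)=\sum_{x^n}P_{X^n}(x^n)\overline h^\varepsilon(x^n)$; $\overline H_s(\mathbf X|\mathbf Y)=\lim_{\varepsilon\downarrow0}\limsup_n\frac1n\overline H_s^\varepsilon(X^n|Y^n)$. *)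

theory Defs
  imports "HOL-Probability.Probability"
begin

text \<open>A general correlated source: for each n a joint pmf of (X^n, Y^n) on
  length-n sequences over countable (finite or countably infinite) alphabets.\<close>

definition PX :: "('a \<times> 'b) pmf \<Rightarrow> 'a \<Rightarrow> real" where
  "PX Q x = pmf (map_pmf fst Q) x"

definition PY :: "('a \<times> 'b) pmf \<Rightarrow> 'b \<Rightarrow> real" where
  "PY Q y = pmf (map_pmf snd Q) y"

definition PXgY :: "('a \<times> 'b) pmf \<Rightarrow> 'a \<Rightarrow> 'b \<Rightarrow> real" where
  "PXgY Q x y = pmf Q (x, y) / PY Q y"

definition PYgX :: "('a \<times> 'b) pmf \<Rightarrow> 'b \<Rightarrow> 'a \<Rightarrow> real" where
  "PYgX Q y x = pmf Q (x, y) / PX Q x"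

definition hbar :: "real \<Rightarrow> ('a \<times> 'b) pmf \<Rightarrow> 'a \<Rightarrow> ereal" where
  "hbar \<epsilon> Q x = Inf {ereal a | a.
      (\<Sum>\<^sub>\<infinity> y \<in> {y. log 2 (1 / PXgY Q x y) > a}. PYgX Q y x) \<le> \<epsilon>}"

text \<open>H-bar_s^epsilon(X^n|Y^n) = sum over x of P_X(x) * hbar(x) (values in [0,\<infinity>]
  for 0 < epsilon < 1, where hbar is nonnegative)\<close>
definition Hs_eps :: "real \<Rightarrow> ('a \<times> 'b) pmf \<Rightarrow> ereal" where
  "Hs_eps \<epsilon> Q = enn2ereal (\<Sum>\<^sub>\<infinity> x. ennreal (PX Q x) * e2ennreal (hbar \<epsilon> Q x))"

definition Hs :: "(nat \<Rightarrow> ('a \<times> 'b) pmf) \<Rightarrow> ereal" where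
  "Hs P = Lim (at_right (0::real))
     (\<lambda>\<epsilon>. limsup (\<lambda>n. ereal (1 / real n) * Hs_eps \<epsilon> (P n)))"

end

theory Submission
  imports Defs
begin

lemma hbar_antimono: "e \<le> e' \<Longrightarrow> hbar e' Q x \<le> hbar e Q x"
  unfolding hbar_def by (rule Inf_superset_mono) auto

lemma Hs_eps_antimono: "e \<le> e' \<Longrightarrow> Hs_eps e' Q \<le> Hs_eps e Q"
  unfolding Hs_eps_def
proof -
  assume "e \<le> e'"
  have "(\<Sum>\<^sub>\<infinity> x. ennreal (PX Q x) * e2ennreal (hbar e' Q x))
      \<le> (\<Sum>\<^sub>\<infinity> x. ennreal (PX Q x) * e2ennreal (hbar e Q x))"
    apply (rule infsum_mono)
      apply (rule nonneg_summable_on_complete, simp)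
     apply (rule nonneg_summable_on_complete, simp)
    apply (rule mult_left_mono)
     apply (rule e2ennreal_mono)
    apply (rule hbar_antimono[OF \<open>e \<le> e'\<close>])
    apply simp
    done
  then show "enn2ereal (\<Sum>\<^sub>\<infinity> x. ennreal (PX Q x) * e2ennreal (hbar e' Q x))
      \<le> enn2ereal (\<Sum>\<^sub>\<infinity> x. ennreal (PX Q x) * e2ennreal (hbar e Q x))"
    by (simp add: less_eq_ennreal.rep_eq[symmetric])
qed

lemma diag:
  fixes g :: "nat \<Rightarrow> nat \<Rightarrow> ereal" and S :: ereal
  assumes "\<And>k. limsup (g k) \<le> S"
  shows "\<exists>kk::nat\<Rightarrow>nat. (\<forall>n. kk n \<le> n) \<and> filterlim kk at_top sequentially
           \<and> limsup (\<lambda>n. g (kk n) n) \<le> S"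
proof (cases "S = \<infinity>")
  case True
  then show ?thesis by (intro exI[of _ "\<lambda>n. n"]) (auto simp: filterlim_ident)
next
  case False
  define c where "c j = (if S = -\<infinity> then - ereal (real j + 1) else S + ereal (1 / (real j + 1)))" for j :: nat
  have cS: "S < c j" for j
    using False by (cases S) (auto simp: c_def)
  have cmono: "i \<le> j \<Longrightarrow> c j \<le> c i" for i j
    using False by (cases S) (auto simp: c_def frac_le)
  have cb: "\<exists>j. c j \<le> b" if "S < b" for b
  proof (cases b)
    case (real r)
    show ?thesis
    proof (cases S)
      case (real s)
      with \<open>S < b\<close> \<open>b = ereal r\<close> have "0 < r - s" by simp
      then obtain j where "inverse (real j) < r - s" "0 < j" using ex_inverse_of_nat_less by blast
      moreover have "1 / (real j + 1) \<le> inverse (real j)"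
        using \<open>0 < j\<close> by (simp add: field_simps)
      ultimately have "1 / (real j + 1) \<le> r - s" by linarith
      then show ?thesis using real \<open>b = ereal r\<close> by (intro exI[of _ j]) (simp add: c_def)
    next
      case PInf with False show ?thesis by simp
    next
      case MInf
      obtain j where "- r < real j" using reals_Archimedean2 by blast
      then show ?thesis using MInf \<open>b = ereal r\<close> by (intro exI[of _ j]) (simp add: c_def)
    qed
  next
    case PInf then show ?thesis by simp
  next
    case MInf with \<open>S < b\<close> show ?thesis by simp
  qed
  have "\<forall>k. \<exists>N. \<forall>m\<ge>N. g k m < c k"
  proof
    fix k
    have "eventually (\<lambda>m. g k m < c k) sequentially"
      using Limsup_lessD[where y="c k" and f="g k" and F=sequentially] assms[of k] cS[of k] by (meson le_less_trans)
    then show "\<exists>N. \<forall>m\<ge>N. g k m < c k" by (simp add: eventually_sequentially)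
  qed
  then obtain N where N: "\<And>k m. m \<ge> N k \<Longrightarrow> g k m < c k" by metis
  define kk where "kk n = Max ({0} \<union> {j. j \<le> n \<and> N j \<le> n})" for n
  have fin: "finite ({0} \<union> {j. j \<le> n \<and> N j \<le> n})" for n by auto
  have kk_le: "kk n \<le> n" for n
    unfolding kk_def using fin by (subst Max_le_iff) auto
  have kk_ge: "K \<le> kk n" if "n \<ge> max K (N K)" for K n
    unfolding kk_def using fin that by (intro Max_ge) auto
  have kk_in: "N (kk n) \<le> n" if "1 \<le> kk n" for n
  proof -
    have "kk n \<in> {0} \<union> {j. j \<le> n \<and> N j \<le> n}" unfolding kk_def using fin by (intro Max_in) auto
    with that show ?thesis by auto
  qed
  have lim: "filterlim kk at_top sequentially"
    unfolding filterlim_at_top eventually_sequentially using kk_ge by blast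
  have "limsup (\<lambda>n. g (kk n) n) \<le> S"
    unfolding Limsup_le_iff
  proof (intro allI impI)
    fix y assume "S < y"
    then obtain j where j: "c j \<le> y" using cb by blast
    have "eventually (\<lambda>n. max j 1 \<le> kk n) sequentially"
      using lim unfolding filterlim_at_top by blast
    then show "eventually (\<lambda>n. g (kk n) n < y) sequentially"
    proof (rule eventually_mono)
      fix n assume h: "max j 1 \<le> kk n"
      then have "g (kk n) n < c (kk n)" using N kk_in by auto
      also have "\<dots> \<le> c j" using cmono h by auto
      finally show "g (kk n) n < y" using j by simp
    qed
  qed
  then show ?thesis using kk_le lim by blast
qed

theorem lemma5:
  fixes P :: "nat \<Rightarrow> ('a::countable list \<times> 'b::countable list) pmf"
  assumes "\<forall>n. set_pmf (P n) \<subseteq> {(x, y). length x = n \<and> length y = n}"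
  shows "\<exists>\<epsilon> :: nat \<Rightarrow> real. (\<forall>n. 0 < \<epsilon> n \<and> \<epsilon> n < 1) \<and> \<epsilon> \<longlonglongrightarrow> 0
     \<and> Hs P = limsup (\<lambda>n. ereal (1 / real n) * Hs_eps (\<epsilon> n) (P n))
     \<and> (\<lambda>n. (1 / real n) * log 2 (1 / \<epsilon> n)) \<longlonglongrightarrow> 0"
proof -
  define f where "f n e = ereal (1 / real n) * Hs_eps e (P n)" for n e
  define F where "F e = limsup (\<lambda>n. f n e)" for e
  define S where "S = (SUP e\<in>{0<..}. F e)"
  have fmono: "e \<le> e' \<Longrightarrow> f n e' \<le> f n e" for n e e'
    unfolding f_def by (rule ereal_mult_left_mono) (auto intro: Hs_eps_antimono)
  have Fmono: "e \<le> e' \<Longrightarrow> F e' \<le> F e" for e e'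
    unfolding F_def by (intro Limsup_mono always_eventually allI fmono)
  have FS: "(F \<longlongrightarrow> S) (at_right 0)"
  proof (rule order_tendstoI)
    fix a assume "a < S"
    then obtain e0 where e0: "e0 > 0" "a < F e0" unfolding S_def less_SUP_iff by auto
    show "eventually (\<lambda>e. a < F e) (at_right 0)"
      unfolding eventually_at_right[OF e0(1)]
    proof (intro exI[of _ e0] conjI allI impI e0(1))
      fix y :: real assume "0 < y" "y < e0"
      then have "F e0 \<le> F y" using Fmono by simp
      then show "a < F y" using e0(2) by simp
    qed
  next
    fix a assume "S < a"
    show "eventually (\<lambda>e. F e < a) (at_right 0)"
      using eventually_at_right_less[of "0::real"]
    proof (rule eventually_mono)
      fix e :: real assume "0 < e"
      then have "F e \<le> S" unfolding S_def by (auto intro: SUP_upper)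
      then show "F e < a" using \<open>S < a\<close> by simp
    qed
  qed
  have Feq: "F = (\<lambda>\<epsilon>. limsup (\<lambda>n. ereal (1 / real n) * Hs_eps \<epsilon> (P n)))"
    by (rule ext) (simp only: F_def f_def)
  have "Lim (at_right 0) F = S" by (rule tendsto_Lim[OF trivial_limit_at_right_real FS])
  then have HsS: "Hs P = S"
    by (simp only: Hs_def Feq)
  define g where "g k n = f n (1 / (real k + 2))" for k n
  have "limsup (g k) \<le> S" for k
  proof -
    have "limsup (g k) = F (1 / (real k + 2))" by (simp only: g_def[abs_def] F_def)
    also have "\<dots> \<le> S" unfolding S_def by (rule SUP_upper) auto
    finally show ?thesis .
  qed
  from diag[OF this] obtain kk where kk0: "(\<forall>n. kk n \<le> n) \<and> filterlim kk at_top sequentially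
    \<and> limsup (\<lambda>n. g (kk n) n) \<le> S" ..
  have kk1: "\<And>n. kk n \<le> n" using kk0 by simp
  have kk2: "filterlim kk at_top sequentially" using kk0 by simp
  have kk3: "limsup (\<lambda>n. g (kk n) n) \<le> S" using kk0 by simp
  note kk = kk1 kk2 kk3
  define \<epsilon> where "\<epsilon> n = 1 / (real (kk n) + 2)" for n
  have pos: "\<forall>n. 0 < \<epsilon> n \<and> \<epsilon> n < 1" unfolding \<epsilon>_def by auto
  have h0: "(\<lambda>m::nat. 1 / (real m + 2)) \<longlonglongrightarrow> 0"
  proof (rule tendsto_sandwich[of "\<lambda>n. 0" _ _ "\<lambda>n. inverse (real (Suc n))"])
    show "eventually (\<lambda>n. 0 \<le> 1 / (real n + 2)) sequentially" by simp
    show "eventually (\<lambda>n. 1 / (real n + 2) \<le> inverse (real (Suc n))) sequentially"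
      by (intro always_eventually allI) (simp add: field_simps)
    show "(\<lambda>n. 0::real) \<longlonglongrightarrow> 0" by simp
    show "(\<lambda>n. inverse (real (Suc n))) \<longlonglongrightarrow> 0" by (rule LIMSEQ_inverse_real_of_nat)
  qed
  have elim: "\<epsilon> \<longlonglongrightarrow> 0"
    using filterlim_compose[OF h0 kk(2)] unfolding \<epsilon>_def[abs_def] by (simp add: o_def)
  have up: "limsup (\<lambda>n. f n (\<epsilon> n)) \<le> S"
    using kk(3) unfolding g_def \<epsilon>_def .
  have low: "S \<le> limsup (\<lambda>n. f n (\<epsilon> n))"
    unfolding S_def
  proof (rule SUP_least)
    fix e :: real assume "e \<in> {0<..}"
    then have ev: "eventually (\<lambda>n. \<epsilon> n < e) sequentially"
      using order_tendstoD(2)[OF elim] by simp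
    show "F e \<le> limsup (\<lambda>n. f n (\<epsilon> n))"
      unfolding F_def
      apply (rule Limsup_mono)
      apply (rule eventually_mono[OF ev])
      apply (rule fmono)
      apply (erule less_imp_le)
      done
  qed
  have lnlim: "(\<lambda>n. ln (real n) / real n) \<longlonglongrightarrow> 0"
    using filterlim_compose[OF ln_x_over_x_tendsto_0 filterlim_real_sequentially] by (simp add: o_def)
  have loglim: "(\<lambda>n. (1 / real n) * log 2 (1 / \<epsilon> n)) \<longlonglongrightarrow> 0"
  proof (rule tendsto_sandwich[of "\<lambda>n. 0" _ _ "\<lambda>n. (2 / ln 2) * (ln (real n) / real n)"])
    show "eventually (\<lambda>n. 0 \<le> (1 / real n) * log 2 (1 / \<epsilon> n)) sequentially"
      unfolding \<epsilon>_def by (intro always_eventually allI mult_nonneg_nonneg) auto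
    show "eventually (\<lambda>n. (1 / real n) * log 2 (1 / \<epsilon> n) \<le> (2 / ln 2) * (ln (real n) / real n)) sequentially"
      unfolding eventually_sequentially
    proof (intro exI[of _ 2] allI impI)
      fix n :: nat assume n2: "2 \<le> n"
      then have rn: "2 \<le> real n" by simp
      have "log 2 (1 / \<epsilon> n) = log 2 (real (kk n) + 2)" unfolding \<epsilon>_def by simp
      also have "\<dots> \<le> log 2 (real n * real n)"
      proof (subst log_le_cancel_iff)
        have "real (kk n) + 2 \<le> real n + 2" using kk(1)[of n] by simp
        also have "\<dots> \<le> real n * real n" using mult_right_mono[OF rn, of "real n"] rn by linarith
        finally show "real (kk n) + 2 \<le> real n * real n" .
      qed (use rn in auto)
      also have "\<dots> = 2 * ln (real n) / ln 2"
        using rn by (simp add: log_def ln_mult)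
      finally have le: "log 2 (1 / \<epsilon> n) \<le> 2 * ln (real n) / ln 2" .
      have "(1 / real n) * log 2 (1 / \<epsilon> n) \<le> (1 / real n) * (2 * ln (real n) / ln 2)"
        by (rule mult_left_mono[OF le]) simp
      also have "\<dots> = (2 / ln 2) * (ln (real n) / real n)" by simp
      finally show "(1 / real n) * log 2 (1 / \<epsilon> n) \<le> (2 / ln 2) * (ln (real n) / real n)" .
    qed
    show "(\<lambda>n. 0::real) \<longlonglongrightarrow> 0" by simp
    show "(\<lambda>n. (2 / ln 2) * (ln (real n) / real n)) \<longlonglongrightarrow> 0"
      using tendsto_mult_right_zero[OF lnlim, of "2 / ln 2"] by simp
  qed
  show ?thesis
    apply (rule exI[of _ \<epsilon>])
  proof (intro conjI)
    show "Hs P = limsup (\<lambda>n. ereal (1 / real n) * Hs_eps (\<epsilon> n) (P n))"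
      using HsS antisym[OF up low] unfolding f_def by simp
  qed (use pos elim loglim in auto)
qed

end
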